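(* Let $h\ge 0$ and $0\le i\le h$, and let $g_i^{(h)}(z)=\sum_{n\ge0}b^{(h)}_{n,i}z^n$, where $b^{(h)}_{n,i}$ is the number of reversed partial ternary paths of length $n$ ending at level $i$ all of whose ordinates are at most $h$. Then $$(-1)^i g_i^{(h)}(z)=\frac{d_{h-i}}{d_{h+1}}\,w_i-z^2\,\frac{d_{h-i-1}}{d_{h+1}}\,w_{i-1},$$ where $\sum_{j\ge0}d_jX^j=\dfrac{1}{1-X+z^3X^3}$, $\sum_{n\ge 0}w_nX^n=\dfrac{1}{1-zX^2+z^3X^3}$, and $w_{-1}=0$, $d_{-1}=0$.
   Context: A reversed partial ternary path of length $n$ is a lattice path $(0,c_0),\dots,(n,c_n)$ with $c_0=0$, steps $(1,2)$ or $(1,-1)$, and all $c_j\ge0$; it ends at level $c_n$. *)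

theory Defs
  imports "HOL-Computational_Algebra.Formal_Power_Series"
begin

definition bounded_paths :: "nat \<Rightarrow> nat \<Rightarrow> nat \<Rightarrow> (nat \<Rightarrow> int) set" where
  "bounded_paths h n i = {c. c 0 = 0
      \<and> (\<forall>j<n. c (Suc j) - c j = 2 \<or> c (Suc j) - c j = -1)
      \<and> (\<forall>j\<le>n. 0 \<le> c j \<and> c j \<le> int h)
      \<and> c n = int i
      \<and> (\<forall>j>n. c j = 0)}"

definition b_count :: "nat \<Rightarrow> nat \<Rightarrow> nat \<Rightarrow> nat" where
  "b_count h n i = card (bounded_paths h n i)"

definition g_gf :: "nat \<Rightarrow> nat \<Rightarrow> rat fps" where
  "g_gf h i = Abs_fps (\<lambda>n. of_nat (b_count h n i))"

text \<open>Generating functions in X whose coefficients are formal power series in z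
  (z = fps_X :: rat fps, X = fps_X :: rat fps fps).\<close>
definition D_gf :: "rat fps fps" where
  "D_gf = inverse (1 - fps_X + fps_const (fps_X ^ 3) * fps_X ^ 3)"

definition W_gf :: "rat fps fps" where
  "W_gf = inverse (1 - fps_const fps_X * fps_X ^ 2 + fps_const (fps_X ^ 3) * fps_X ^ 3)"

definition dd :: "int \<Rightarrow> rat fps" where
  "dd j = (if j < 0 then 0 else fps_nth D_gf (nat j))"

definition ww :: "int \<Rightarrow> rat fps" where
  "ww j = (if j < 0 then 0 else fps_nth W_gf (nat j))"

end

theory Submission
  imports Defs
begin

abbreviation zz :: "rat fps" where "zz \<equiv> fps_X"

lemma inv_ok: fixes P :: "rat fps fps" assumes "fps_nth P 0 = 1" shows "inverse P * P = 1"
proof -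
  have "P * fps_right_inverse P 1 = 1" by (rule fps_right_inverse) (simp add: assms)
  moreover have "inverse P = Abs_fps (fps_right_inverse_constructor P (inverse (fps_nth P 0)))" by (rule fps_inverse_def)
  moreover have "inverse (fps_nth P 0) = 1" using assms by simp
  ultimately show ?thesis by (simp add: mult.commute)
qed

lemma D_rec: "D_gf * (1 - fps_X + fps_const (fps_X ^ 3) * fps_X ^ 3) = 1"
  unfolding D_gf_def by (rule inv_ok) simp

lemma W_rec: "W_gf * (1 - fps_const fps_X * fps_X ^ 2 + fps_const (fps_X ^ 3) * fps_X ^ 3) = 1"
  unfolding W_gf_def by (rule inv_ok) (simp add: numeral_eq_Suc)

lemma dd_rec:
  assumes "j \<ge> 1" shows "dd j = dd (j-1) - zz^3 * dd (j-3)"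
proof -
  have e: "D_gf * (1 - fps_X + fps_const (fps_X ^ 3) * fps_X ^ 3) = D_gf - fps_X * D_gf + fps_const (fps_X ^ 3) * (fps_X ^ 3 * D_gf)"
    by (simp add: algebra_simps)
  have "fps_nth (D_gf - fps_X * D_gf + fps_const (fps_X ^ 3) * (fps_X ^ 3 * D_gf)) (nat j) = 0"
    using D_rec assms e by simp
  hence "fps_nth D_gf (nat j) - fps_nth D_gf (nat j - 1) + fps_X ^ 3 * (if nat j < 3 then 0 else fps_nth D_gf (nat j - 3)) = 0"
    using assms by (simp only: fps_X_power_mult_nth fps_sub_nth fps_add_nth fps_mult_left_const_nth fps_X_mult_nth) simp
  moreover have "nat (j-1) = nat j - 1" "nat (j - 3) = nat j - 3" "(nat j < 3) = (j < 3)" using assms by auto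
  ultimately show ?thesis using assms unfolding dd_def by (auto simp: algebra_simps split: if_splits)
qed

lemma ww_rec:
  assumes "j \<ge> 1" shows "ww j = zz * ww (j-2) - zz^3 * ww (j-3)"
proof -
  have e: "W_gf * (1 - fps_const fps_X * fps_X ^ 2 + fps_const (fps_X ^ 3) * fps_X ^ 3) = W_gf - fps_const fps_X * (fps_X ^ 2 * W_gf) + fps_const (fps_X ^ 3) * (fps_X ^ 3 * W_gf)"
    by (simp add: algebra_simps)
  have "fps_nth (W_gf - fps_const fps_X * (fps_X ^ 2 * W_gf) + fps_const (fps_X ^ 3) * (fps_X ^ 3 * W_gf)) (nat j) = 0"
    using W_rec assms e by simp
  hence "fps_nth W_gf (nat j) - fps_X * (if nat j < 2 then 0 else fps_nth W_gf (nat j - 2)) + fps_X ^ 3 * (if nat j < 3 then 0 else fps_nth W_gf (nat j - 3)) = 0"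
    using assms by (simp only: fps_X_power_mult_nth fps_sub_nth fps_add_nth fps_mult_left_const_nth)
  moreover have "nat (j-2) = nat j - 2" "nat (j - 3) = nat j - 3" "(nat j < 3) = (j < 3)" "(nat j < 2) = (j < 2)" using assms by auto
  ultimately show ?thesis using assms unfolding ww_def by (auto simp: algebra_simps split: if_splits)
qed

lemma dd0: "dd 0 = 1" unfolding dd_def D_gf_def by simp
lemma ww0: "ww 0 = 1" unfolding ww_def W_gf_def by (simp add: numeral_eq_Suc)

definition GI :: "nat \<Rightarrow> int \<Rightarrow> rat fps" where
  "GI h i = dd (int h - i) * ww i - zz^2 * dd (int h - i - 1) * ww (i - 1)"

lemma dd_neg: "j < 0 \<Longrightarrow> dd j = 0" unfolding dd_def by simp
lemma ww_neg: "j < 0 \<Longrightarrow> ww j = 0" unfolding ww_def by simp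

lemma GI_rec:
  assumes "0 \<le> i" "i \<le> int h"
  shows "GI h i - zz * GI h (i-2) + zz * GI h (i+1) = (if i = 0 then dd (int h + 1) else 0)"
proof -
  define j where "j = int h - i"
  have j0: "j \<ge> 0" using assms j_def by simp
  have w1: "ww (i+1) = zz*ww(i-1) - zz^3*ww(i-2)" using ww_rec[of "i+1"] assms by (simp add: algebra_simps)
  have w2: "zz*ww(i-2) - zz^3*ww(i-3) = ww i - (if i = 0 then 1 else 0)"
  proof (cases "i = 0")
    case True thus ?thesis by (simp add: ww_neg ww0)
  next
    case False thus ?thesis using ww_rec[of i] assms by simp
  qed
  have d1: "dd (j+2) = dd (j+1) - zz^3 * dd (j-1)" using dd_rec[of "j+2"] j0 by (simp add: algebra_simps)
  have d2: "dd (j+1) = dd j - zz^3 * dd (j-2)" using dd_rec[of "j+1"] j0 by (simp add: algebra_simps)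
  have g0: "GI h i = dd j * ww i - zz^2 * dd (j-1) * ww (i-1)" unfolding GI_def j_def by simp
  have g1: "GI h (i-2) = dd (j+2) * ww (i-2) - zz^2 * dd (j+1) * ww (i-3)" unfolding GI_def j_def
    by (simp add: algebra_simps)
  have g2: "GI h (i+1) = dd (j-1) * ww (i+1) - zz^2 * dd (j-2) * ww i" unfolding GI_def j_def
    by (simp add: algebra_simps)
  have r: "(if i = 0 then dd (int h + 1) else 0) = (if i = 0 then 1 else 0) * dd (j+1)"
    unfolding j_def by simp
  show ?thesis unfolding g0 g1 g2 r using w1 w2 d1 d2 by algebra
qed

lemma GI_m1: "GI h (-1) = 0" unfolding GI_def by (simp add: ww_neg)
lemma GI_m2: "GI h (-2) = 0" unfolding GI_def by (simp add: ww_neg)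
lemma GI_top: "GI h (int h + 1) = 0" unfolding GI_def by (simp add: dd_neg)

lemma dd_nth0: "fps_nth (dd (int n)) 0 = 1"
proof (induction n)
  case 0 thus ?case by (simp add: dd0)
next
  case (Suc n)
  have "dd (int (Suc n)) = dd (int n) - zz^3 * dd (int (Suc n) - 3)"
    using dd_rec[of "int (Suc n)"] by simp
  thus ?case using Suc by (simp add: fps_X_power_mult_nth)
qed

definition Iv :: "nat \<Rightarrow> rat fps" where "Iv h = inverse (dd (int h + 1))"

lemma Iv_mult: "dd (int h + 1) * Iv h = 1"
proof -
  have "fps_nth (dd (int (Suc h))) 0 = 1" by (rule dd_nth0)
  hence "fps_nth (dd (int h + 1)) 0 \<noteq> 0" by (simp add: add.commute)
  thus ?thesis unfolding Iv_def by (rule inverse_mult_eq_1')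
qed

definition EI :: "nat \<Rightarrow> int \<Rightarrow> rat fps" where
  "EI h k = (if 0 \<le> k \<and> k \<le> int h then (-1)^nat k * GI h k * Iv h else 0)"

lemma EI_rec:
  assumes "0 \<le> k" "k \<le> int h"
  shows "EI h k = (if k = 0 then 1 else 0) + zz * EI h (k-2) + zz * EI h (k+1)"
proof -
  define s :: "rat fps" where "s = (-1)^nat k"
  have e0: "EI h k = s * GI h k * Iv h" using assms unfolding EI_def s_def by simp
  have e1: "EI h (k-2) = s * GI h (k-2) * Iv h"
  proof (cases "k \<ge> 2")
    case True
    hence "nat k = Suc (Suc (nat (k-2)))" by simp
    hence "s = (-1)^nat (k-2)" unfolding s_def by simp
    thus ?thesis using True assms unfolding EI_def by simp
  next
    case False
    hence "k - 2 = -1 \<or> k - 2 = -2" using assms by auto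
    thus ?thesis using False unfolding EI_def by (auto simp: GI_m1 GI_m2)
  qed
  have e2: "EI h (k+1) = - s * GI h (k+1) * Iv h"
  proof (cases "k + 1 \<le> int h")
    case True
    have "nat (k+1) = Suc (nat k)" using assms by simp
    hence "(-1::rat fps)^nat (k+1) = - s" unfolding s_def by simp
    thus ?thesis using True assms unfolding EI_def by simp
  next
    case False
    hence "k + 1 = int h + 1" using assms by auto
    thus ?thesis using False unfolding EI_def by (simp add: GI_top)
  qed
  have r: "GI h k - zz * GI h (k-2) + zz * GI h (k+1) = (if k = 0 then dd (int h + 1) else 0)"
    by (rule GI_rec[OF assms])
  have sd: "s * (if k = 0 then dd (int h + 1) else 0) * Iv h = (if k = 0 then 1 else 0)"
    using Iv_mult[of h] unfolding s_def by simp
  have "EI h k = s * (GI h k - zz * GI h (k-2) + zz * GI h (k+1)) * Iv h + zz * EI h (k-2) + zz * EI h (k+1)"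
    unfolding e0 e1 e2 by (simp add: algebra_simps)
  also have "\<dots> = (if k = 0 then 1 else 0) + zz * EI h (k-2) + zz * EI h (k+1)"
    unfolding r sd ..
  finally show ?thesis .
qed

definition bp :: "nat \<Rightarrow> nat \<Rightarrow> int \<Rightarrow> (nat \<Rightarrow> int) set" where
  "bp h n k = {c. c 0 = 0
      \<and> (\<forall>j<n. c (Suc j) - c j = 2 \<or> c (Suc j) - c j = -1)
      \<and> (\<forall>j\<le>n. 0 \<le> c j \<and> c j \<le> int h)
      \<and> c n = k
      \<and> (\<forall>j>n. c j = 0)}"

lemma bp_bounded: "bounded_paths h n i = bp h n (int i)"
  unfolding bounded_paths_def bp_def ..

lemma bp_0: "bp h 0 k = (if k = 0 then {\<lambda>_. 0} else {})"
proof -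
  have "c \<in> bp h 0 k \<longleftrightarrow> k = 0 \<and> c = (\<lambda>_. 0)" for c
  proof
    assume "c \<in> bp h 0 k"
    hence a: "c 0 = 0" "c 0 = k" "\<forall>j>0. c j = 0" unfolding bp_def by auto
    hence "c = (\<lambda>_. 0)" by (metis gr0I)
    thus "k = 0 \<and> c = (\<lambda>_. 0)" using a by simp
  next
    assume "k = 0 \<and> c = (\<lambda>_. 0)"
    thus "c \<in> bp h 0 k" unfolding bp_def by auto
  qed
  thus ?thesis by auto
qed

lemma bp_Suc: "bp h (Suc n) k = (if 0 \<le> k \<and> k \<le> int h
     then (\<lambda>c. c(Suc n := k)) ` (bp h n (k-2) \<union> bp h n (k+1)) else {})"
proof (cases "0 \<le> k \<and> k \<le> int h")
  case False
  hence "bp h (Suc n) k = {}" unfolding bp_def by force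
  thus ?thesis by (simp only: if_not_P[OF False])
next
  case True
  have "bp h (Suc n) k \<subseteq> (\<lambda>c. c(Suc n := k)) ` (bp h n (k-2) \<union> bp h n (k+1))"
  proof
    fix c assume c: "c \<in> bp h (Suc n) k"
    define c' where "c' = c(Suc n := 0)"
    have cc: "c = c'(Suc n := k)" using c unfolding c'_def bp_def by auto
    have st: "c (Suc n) - c n = 2 \<or> c (Suc n) - c n = -1" using c unfolding bp_def by auto
    have "c' \<in> bp h n (c n)" using c unfolding bp_def c'_def by auto
    moreover have "c' n = c n" unfolding c'_def by simp
    moreover have "c (Suc n) = k" using c unfolding bp_def by auto
    ultimately have m: "c' \<in> bp h n (c n)" and "c n = k - 2 \<or> c n = k + 1" using st by auto
    hence "c' \<in> bp h n (k-2) \<union> bp h n (k+1)" by (metis UnI1 UnI2)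
    thus "c \<in> (\<lambda>c. c(Suc n := k)) ` (bp h n (k-2) \<union> bp h n (k+1))" using cc by blast
  qed
  moreover have "(\<lambda>c. c(Suc n := k)) ` (bp h n (k-2) \<union> bp h n (k+1)) \<subseteq> bp h (Suc n) k"
  proof
    fix c assume "c \<in> (\<lambda>c. c(Suc n := k)) ` (bp h n (k-2) \<union> bp h n (k+1))"
    then obtain c' where c': "c' \<in> bp h n (k-2) \<union> bp h n (k+1)" and cc: "c = c'(Suc n := k)" by blast
    have p: "c' 0 = 0" "\<forall>j<n. c' (Suc j) - c' j = 2 \<or> c' (Suc j) - c' j = -1"
      "\<forall>j\<le>n. 0 \<le> c' j \<and> c' j \<le> int h" "c' n = k - 2 \<or> c' n = k + 1" "\<forall>j>n. c' j = 0"
      using c' unfolding bp_def by auto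
    have "\<forall>j<Suc n. c (Suc j) - c j = 2 \<or> c (Suc j) - c j = -1"
    proof (intro allI impI)
      fix j assume "j < Suc n"
      thus "c (Suc j) - c j = 2 \<or> c (Suc j) - c j = -1"
        using p(2,4) unfolding cc by (cases "j = n") auto
    qed
    moreover have "\<forall>j\<le>Suc n. 0 \<le> c j \<and> c j \<le> int h"
      using p(3) True unfolding cc by (auto simp: le_Suc_eq)
    ultimately show "c \<in> bp h (Suc n) k" using p True unfolding cc bp_def by auto
  qed
  ultimately show ?thesis using True by auto
qed

lemma bp_finite: "finite (bp h n k)"
proof (induction n arbitrary: k)
  case 0 thus ?case by (simp add: bp_0)
next
  case (Suc n) thus ?case by (simp add: bp_Suc)
qed

lemma bp_card_Suc: "card (bp h (Suc n) k) = (if 0 \<le> k \<and> k \<le> int h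
     then card (bp h n (k-2)) + card (bp h n (k+1)) else 0)"
proof (cases "0 \<le> k \<and> k \<le> int h")
  case True
  have inj: "inj_on (\<lambda>c. c(Suc n := k)) (bp h n (k-2) \<union> bp h n (k+1))"
  proof (rule inj_onI)
    fix c1 c2 assume a: "c1 \<in> bp h n (k-2) \<union> bp h n (k+1)" "c2 \<in> bp h n (k-2) \<union> bp h n (k+1)"
      and e: "c1(Suc n := k) = c2(Suc n := k)"
    have "c1 (Suc n) = 0" "c2 (Suc n) = 0" using a unfolding bp_def by auto
    thus "c1 = c2" using e by (metis fun_upd_triv fun_upd_upd)
  qed
  have disj: "bp h n (k-2) \<inter> bp h n (k+1) = {}" unfolding bp_def by auto
  show ?thesis using True
    by (simp add: bp_Suc card_image[OF inj] card_Un_disjoint[OF bp_finite bp_finite disj])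
next
  case False
  show ?thesis by (simp only: bp_Suc if_not_P[OF False] card.empty)
qed

lemma EI_count: "fps_nth (EI h k) n = of_nat (card (bp h n k))"
proof (induction n arbitrary: k)
  case 0
  show ?case
  proof (cases "0 \<le> k \<and> k \<le> int h")
    case True
    thus ?thesis by (subst EI_rec) (auto simp: bp_0)
  next
    case False
    hence "k \<noteq> 0" by auto
    thus ?thesis unfolding EI_def if_not_P[OF False] by (simp add: bp_0)
  qed
next
  case (Suc n)
  show ?case
  proof (cases "0 \<le> k \<and> k \<le> int h")
    case True
    thus ?thesis by (subst EI_rec) (auto simp: bp_card_Suc Suc.IH)
  next
    case False
    thus ?thesis unfolding EI_def bp_card_Suc if_not_P[OF False] by simp
  qed
qed

lemma g_EI: "g_gf h i = EI h (int i)"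
  by (rule fps_ext) (simp add: g_gf_def b_count_def bp_bounded EI_count)

theorem mainTheorem6:
  fixes h i :: nat
  assumes "i \<le> h"
  shows "(-1) ^ i * g_gf h i =
           dd (int h - int i) / dd (int h + 1) * ww (int i)
         - fps_X ^ 2 * (dd (int h - int i - 1) / dd (int h + 1)) * ww (int i - 1)"
proof -
  have nz: "fps_nth (dd (int h + 1)) 0 \<noteq> 0" using dd_nth0[of "Suc h"] by (simp add: add.commute)
  have "(-1) ^ i * g_gf h i = ((-1)^i * (-1)^i) * GI h (int i) * Iv h"
    using assms by (simp add: g_EI EI_def)
  also have "\<dots> = GI h (int i) * Iv h" by (simp add: power_mult_distrib[symmetric])
  also have "\<dots> = dd (int h - int i) / dd (int h + 1) * ww (int i)
         - fps_X ^ 2 * (dd (int h - int i - 1) / dd (int h + 1)) * ww (int i - 1)"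
    unfolding fps_divide_unit[OF nz] GI_def Iv_def by (simp add: algebra_simps)
  finally show ?thesis .
qed

end
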